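(* Let $\eta$ be a denoiser family obeying the scaling relation, $\tau\in\Theta$, and $\nu=\{\nu_N\}$ a sequence such that for every $\sigma>0$ the limit $\lim_{N\to\infty}\frac1N\mathbb E_{\nu_N}\|\mathbf X-\eta(\mathbf X+\sigma\mathbf Z;\tau,\sigma)\|_2^2$ exists. Then $$\delta_{SE}(\tau,\nu\mid\eta)=M(\tau,\nu\mid\eta)$$ (both sides possibly $+\infty$).
   Context: A denoiser family is a collection of maps $\eta(\cdot;\tau,\sigma):\mathbb R^N\to\mathbb R^N$ ($N\ge1$, $\tau\in\Theta$, $\sigma>0$) satisfying the scaling relation $\eta(y;\tau,\sigma)=\sigma\,\eta(y/\sigma;\tau,1)$. For $\nu=\{\nu_N\}$, $\nu_N\in\mathcal P(\mathbb R^N)$, $\delta>0$, $m>0$, the state evolution map is $$\Psi(m;\delta,\tau,\nu)=\lim_{N\to\infty}\frac1N\mathbb E_{\nu_N}\Big\|\mathbf X-\eta\Big(\mathbf X+\sqrt{m/\delta}\,\mathbf Z;\tau,\sqrt{m/\delta}\Big)\Big\|_2^2,$$ with $\mathbf X\sim\nu_N$ independent of $\mathbf Z\sim\mathsf N(0,I_{N\times N})$. The highest fixed point is $\mathrm{HFP}(\delta,\tau,\nu)=\sup\big(\{0\}\cup\{m>0:\Psi(m;\delta,\tau,\nu)\ge m\}\big)$. Define $\delta_{SE}(\tau,\nu\mid\eta)=\inf\{\delta>0:\mathrm{HFP}(\delta,\tau,\nu)=0\}$ (with $\inf\emptyset=+\infty$) and $$M(\tau,\nu\mid\eta)=\sup_{\sigma>0}\lim_{N\to\infty}\frac{1}{N\sigma^2}\mathbb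 E_{\nu_N}\|\mathbf X-\eta(\mathbf X+\sigma\mathbf Z;\tau,\sigma)\|_2^2.$$ *)

theory Defs
  imports "HOL-Probability.Probability"
begin

text \<open>Vectors of R^N are represented as functions nat => real on the index set {..<N}
  (the carrier of the product measure space PiM {..<N} (%_. borel)).\<close>

definition std_gauss :: "nat \<Rightarrow> (nat \<Rightarrow> real) measure" where
  "std_gauss N = PiM {..<N} (\<lambda>_. density lborel std_normal_density)"

definition denoiser_family ::
  "'t set \<Rightarrow> (nat \<Rightarrow> (nat \<Rightarrow> real) \<Rightarrow> 't \<Rightarrow> real \<Rightarrow> (nat \<Rightarrow> real)) \<Rightarrow> bool" where
  "denoiser_family \<Theta> \<eta> \<longleftrightarrow>
     (\<forall>N \<tau> \<sigma> y i. \<tau> \<in> \<Theta> \<and> 0 < \<sigma> \<and> y \<in> space (PiM {..<N} (\<lambda>_. borel)) \<and> i < N \<longrightarrow>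
        \<eta> N y \<tau> \<sigma> i = \<sigma> * \<eta> N (\<lambda>j\<in>{..<N}. y j / \<sigma>) \<tau> 1 i)"

definition denoiser_risk ::
  "(nat \<Rightarrow> (nat \<Rightarrow> real) measure) \<Rightarrow> (nat \<Rightarrow> (nat \<Rightarrow> real) \<Rightarrow> 't \<Rightarrow> real \<Rightarrow> (nat \<Rightarrow> real))
    \<Rightarrow> 't \<Rightarrow> real \<Rightarrow> nat \<Rightarrow> ereal" where
  "denoiser_risk \<nu> \<eta> \<tau> \<sigma> N =
     ereal (1 / real N) *
     enn2ereal (\<integral>\<^sup>+ w. ennreal (\<Sum>i<N. (fst w i - \<eta> N (\<lambda>j\<in>{..<N}. fst w j + \<sigma> * snd w j) \<tau> \<sigma> i)\<^sup>2)
                  \<partial>(\<nu> N \<Otimes>\<^sub>M std_gauss N))"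

definition SE_map ::
  "(nat \<Rightarrow> (nat \<Rightarrow> real) \<Rightarrow> 't \<Rightarrow> real \<Rightarrow> (nat \<Rightarrow> real)) \<Rightarrow> real \<Rightarrow> real \<Rightarrow> 't
    \<Rightarrow> (nat \<Rightarrow> (nat \<Rightarrow> real) measure) \<Rightarrow> ereal" where
  "SE_map \<eta> m \<delta> \<tau> \<nu> = lim (denoiser_risk \<nu> \<eta> \<tau> (sqrt (m / \<delta>)))"

definition HFP ::
  "(nat \<Rightarrow> (nat \<Rightarrow> real) \<Rightarrow> 't \<Rightarrow> real \<Rightarrow> (nat \<Rightarrow> real)) \<Rightarrow> real \<Rightarrow> 't
    \<Rightarrow> (nat \<Rightarrow> (nat \<Rightarrow> real) measure) \<Rightarrow> ereal" where
  "HFP \<eta> \<delta> \<tau> \<nu> = Sup ({0} \<union> {ereal m | m. 0 < m \<and> SE_map \<eta> m \<delta> \<tau> \<nu> \<ge> ereal m})"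

definition delta_SE ::
  "(nat \<Rightarrow> (nat \<Rightarrow> real) \<Rightarrow> 't \<Rightarrow> real \<Rightarrow> (nat \<Rightarrow> real)) \<Rightarrow> 't
    \<Rightarrow> (nat \<Rightarrow> (nat \<Rightarrow> real) measure) \<Rightarrow> ereal" where
  "delta_SE \<eta> \<tau> \<nu> = Inf (ereal ` {\<delta>. 0 < \<delta> \<and> HFP \<eta> \<delta> \<tau> \<nu> = 0})"

definition minimax_M ::
  "(nat \<Rightarrow> (nat \<Rightarrow> real) \<Rightarrow> 't \<Rightarrow> real \<Rightarrow> (nat \<Rightarrow> real)) \<Rightarrow> 't
    \<Rightarrow> (nat \<Rightarrow> (nat \<Rightarrow> real) measure) \<Rightarrow> ereal" where
  "minimax_M \<eta> \<tau> \<nu> = (SUP \<sigma>\<in>{0<..}. lim (denoiser_risk \<nu> \<eta> \<tau> \<sigma>) / ereal (\<sigma>\<^sup>2))"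

end

theory Submission
  imports Defs
begin

lemma risk_nonneg: "denoiser_risk \<nu> \<eta> \<tau> \<sigma> N \<ge> 0"
  unfolding denoiser_risk_def by (rule ereal_0_le_mult) simp_all

lemma div_less_iff:
  assumes "0 < (c::real)"
  shows "a / ereal c < ereal d \<longleftrightarrow> a < ereal (d * c)"
  using ereal_divide_less_iff[of "ereal c" a "ereal d"] assms by simp

theorem mainTheorem15:
  fixes \<Theta> :: "'t set" and \<tau> :: 't
    and \<eta> :: "nat \<Rightarrow> (nat \<Rightarrow> real) \<Rightarrow> 't \<Rightarrow> real \<Rightarrow> (nat \<Rightarrow> real)"
    and \<nu> :: "nat \<Rightarrow> (nat \<Rightarrow> real) measure"
  assumes "denoiser_family \<Theta> \<eta>"
    and "\<tau> \<in> \<Theta>"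
    and "\<forall>N\<ge>1. prob_space (\<nu> N) \<and> sets (\<nu> N) = sets (PiM {..<N} (\<lambda>_. borel))"
    and "\<forall>\<sigma>>0. convergent (denoiser_risk \<nu> \<eta> \<tau> \<sigma>)"
  shows "delta_SE \<eta> \<tau> \<nu> = minimax_M \<eta> \<tau> \<nu>"
proof -
  define R where "R \<sigma> = lim (denoiser_risk \<nu> \<eta> \<tau> \<sigma>)" for \<sigma>
  define g where "g \<sigma> = R \<sigma> / ereal (\<sigma>\<^sup>2)" for \<sigma>
  have Rnn: "R \<sigma> \<ge> 0" if "\<sigma> > 0" for \<sigma>
  proof -
    have "denoiser_risk \<nu> \<eta> \<tau> \<sigma> \<longlonglongrightarrow> R \<sigma>"
      using assms(4) that unfolding R_def by (simp add: convergent_LIMSEQ_iff)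
    then show ?thesis
      by (rule LIMSEQ_le_const) (auto intro: risk_nonneg)
  qed
  have gnn: "g \<sigma> \<ge> 0" if "\<sigma> > 0" for \<sigma>
    unfolding g_def using Rnn[OF that] by simp
  have key: "HFP \<eta> \<delta> \<tau> \<nu> = 0 \<longleftrightarrow> (\<forall>\<sigma>>0. g \<sigma> < ereal \<delta>)" if d: "\<delta> > 0" for \<delta>
  proof -
    define S where "S = {ereal m | m. 0 < m \<and> SE_map \<eta> m \<delta> \<tau> \<nu> \<ge> ereal m}"
    have H: "HFP \<eta> \<delta> \<tau> \<nu> = Sup ({0} \<union> S)" unfolding HFP_def S_def by simp
    have "HFP \<eta> \<delta> \<tau> \<nu> = 0 \<longleftrightarrow> S = {}"
    proof
      assume h: "HFP \<eta> \<delta> \<tau> \<nu> = 0"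
      show "S = {}"
      proof (rule ccontr)
        assume "S \<noteq> {}"
        then obtain m where m: "0 < m" "ereal m \<in> S" unfolding S_def by auto
        then have "ereal m \<le> Sup ({0} \<union> S)" by (intro Sup_upper) auto
        with h H m show False by simp
      qed
    next
      assume "S = {}" then show "HFP \<eta> \<delta> \<tau> \<nu> = 0" using H by simp
    qed
    also have "S = {} \<longleftrightarrow> (\<forall>m>0. SE_map \<eta> m \<delta> \<tau> \<nu> < ereal m)"
      unfolding S_def by (auto simp: not_le)
    also have "\<dots> \<longleftrightarrow> (\<forall>\<sigma>>0. g \<sigma> < ereal \<delta>)"
    proof
      assume h: "\<forall>m>0. SE_map \<eta> m \<delta> \<tau> \<nu> < ereal m"
      show "\<forall>\<sigma>>0. g \<sigma> < ereal \<delta>"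
      proof (intro allI impI)
        fix \<sigma> :: real assume s: "\<sigma> > 0"
        have m: "\<delta> * \<sigma>\<^sup>2 > 0" using s d by simp
        have "sqrt (\<delta> * \<sigma>\<^sup>2 / \<delta>) = \<sigma>" using s d by simp
        with h m have "R \<sigma> < ereal (\<delta> * \<sigma>\<^sup>2)"
          unfolding SE_map_def R_def by metis
        then show "g \<sigma> < ereal \<delta>" unfolding g_def using div_less_iff[of "\<sigma>\<^sup>2"] s by simp
      qed
    next
      assume h: "\<forall>\<sigma>>0. g \<sigma> < ereal \<delta>"
      show "\<forall>m>0. SE_map \<eta> m \<delta> \<tau> \<nu> < ereal m"
      proof (intro allI impI)
        fix m :: real assume m: "m > 0"
        define \<sigma> where "\<sigma> = sqrt (m / \<delta>)"
        have s: "\<sigma> > 0" using m d by (simp add: \<sigma>_def)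
        have e: "\<delta> * \<sigma>\<^sup>2 = m" using m d by (simp add: \<sigma>_def)
        have "g \<sigma> < ereal \<delta>" using h s by simp
        then have "R \<sigma> < ereal (\<delta> * \<sigma>\<^sup>2)" unfolding g_def using div_less_iff[of "\<sigma>\<^sup>2"] s by simp
        then show "SE_map \<eta> m \<delta> \<tau> \<nu> < ereal m" unfolding SE_map_def R_def \<sigma>_def[symmetric]
          using e by simp
      qed
    qed
    finally show ?thesis .
  qed
  define D where "D = {\<delta>. 0 < \<delta> \<and> (\<forall>\<sigma>>0. g \<sigma> < ereal \<delta>)}"
  have dSE: "delta_SE \<eta> \<tau> \<nu> = Inf (ereal ` D)"
    unfolding delta_SE_def D_def using key by (metis (lifting))
  define M where "M = (SUP \<sigma>\<in>{0<..}. g \<sigma>)"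
  have MM: "minimax_M \<eta> \<tau> \<nu> = M" unfolding minimax_M_def M_def g_def R_def by simp
  have M0: "M \<ge> 0"
  proof -
    have "g 1 \<le> M" unfolding M_def by (intro SUP_upper) auto
    with gnn[of 1] show ?thesis by simp
  qed
  have "Inf (ereal ` D) = M"
  proof (rule antisym)
    show "M \<le> Inf (ereal ` D)"
    proof (rule Inf_greatest)
      fix x assume "x \<in> ereal ` D"
      then obtain \<delta> where "x = ereal \<delta>" "\<delta> \<in> D" by auto
      then have "\<forall>\<sigma>>0. g \<sigma> < ereal \<delta>" unfolding D_def by simp
      then have "M \<le> ereal \<delta>" unfolding M_def
        by (intro SUP_least) (auto intro: less_imp_le)
      then show "M \<le> x" using \<open>x = ereal \<delta>\<close> by simp
    qed
  next
    show "Inf (ereal ` D) \<le> M"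
    proof (rule dense_ge)
      fix y assume y: "M < y"
      show "Inf (ereal ` D) \<le> y"
      proof (cases y)
        case (real r)
        have "ereal 0 < ereal r" using y M0 real by (metis order_le_less_trans zero_ereal_def)
        then have "r > 0" by simp
        moreover have "\<forall>\<sigma>>0. g \<sigma> < ereal r"
        proof (intro allI impI)
          fix \<sigma> :: real assume "\<sigma> > 0"
          then have "g \<sigma> \<le> M" unfolding M_def by (intro SUP_upper) auto
          with y real show "g \<sigma> < ereal r" by simp
        qed
        ultimately have "r \<in> D" unfolding D_def by simp
        then show ?thesis using real by (auto intro: Inf_lower)
      next
        case PInf then show ?thesis by simp
      next
        case MInf then show ?thesis using y by simp
      qed
    qed
  qed
  then show ?thesis using dSE MM by simp
qed

end
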